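(* Let $X_0, X_1, X_2$ be three observables in a general physical theory with a set of states $\mathcal{S}$. Assume there is a finite set $\lambda(X)\subset\mathbb{R}$ (the spectrum) such that for every state $s\in\mathcal{S}$ and every $k\in\{0,1,2\}$, measuring $X_k$ on $s$ yields an outcome distributed according to a probability distribution $\Pr(X_k=\cdot\,|\,s)$ supported on $\lambda(X)$, and that every element of $\lambda(X)$ is a possible outcome of some $X_k$. Write $\langle X_k\rangle_s=\sum_{a\in\lambda(X)} a\Pr(X_k=a|s)$. Assume (M): for every state $s\in\mathcal{S}$, $\sum_{k=0}^2\langle X_k\rangle_s=0$. For a state $s$, define $$P_3\coloneqq\frac13\sum_{k=0}^2\Big(\Pr(X_k>0\,|\,s)+\tfrac12\Pr(X_k=0\,|\,s)\Big).$$ Let $x_+\coloneqq\min\{x\in\lambda(X):x>0\}$ and $-x_-\coloneqq\min\{x\in\lambda(X):x<0\}$ (each undefined if the corresponding set is empty). Then for every state $s$, $$P_3\le \mathbf{P}_3^G\coloneqq\begin{cases}\big(1+x_+/x_-\big)^{-1} & \text{if } \lambda(X) \text{ contains both positive and negative values and } \big(x_+<x_- \text{ or } 0\notin\lambda(X)\big),\\ 1/2 & \text{otherwise.}\end{cases}$$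
   Context: "General theory" means only that each observable, measured on a state, produces real outcomes with well-defined probabilities; no further structure is assumed beyond the hypotheses stated. The convention $\Theta(0)=1/2$ for the Heaviside step function is what gives the weight $1/2$ to the outcome $0$ in $P_3$. In the paper's convention, when the spectrum is nonnegative or nonpositive one of $x_\pm$ is undefined and the bound is $1/2$. *)

theory Defs
  imports Complex_Main
begin

text \<open>An observable family: Pr k s a is the probability that measuring X_k on state s
  yields outcome a. Spectrum Lam is a finite set of reals.\<close>

definition expval :: "real set \<Rightarrow> (nat \<Rightarrow> 's \<Rightarrow> real \<Rightarrow> real) \<Rightarrow> nat \<Rightarrow> 's \<Rightarrow> real" where
  "expval Lam Pr k s = (\<Sum>a\<in>Lam. a * Pr k s a)"

definition prob_pos :: "real set \<Rightarrow> (nat \<Rightarrow> 's \<Rightarrow> real \<Rightarrow> real) \<Rightarrow> nat \<Rightarrow> 's \<Rightarrow> real" where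
  "prob_pos Lam Pr k s = (\<Sum>a\<in>{x\<in>Lam. x > 0}. Pr k s a)"

definition prob_zero :: "real set \<Rightarrow> (nat \<Rightarrow> 's \<Rightarrow> real \<Rightarrow> real) \<Rightarrow> nat \<Rightarrow> 's \<Rightarrow> real" where
  "prob_zero Lam Pr k s = (\<Sum>a\<in>{x\<in>Lam. x = 0}. Pr k s a)"

definition P3 :: "real set \<Rightarrow> (nat \<Rightarrow> 's \<Rightarrow> real \<Rightarrow> real) \<Rightarrow> 's \<Rightarrow> real" where
  "P3 Lam Pr s = (1/3) * (\<Sum>k<3. prob_pos Lam Pr k s + (1/2) * prob_zero Lam Pr k s)"

definition x_plus :: "real set \<Rightarrow> real" where
  "x_plus Lam = Min {x\<in>Lam. x > 0}"

definition x_minus :: "real set \<Rightarrow> real" where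
  "x_minus Lam = - Min {x\<in>Lam. x < 0}"

definition P3G :: "real set \<Rightarrow> real" where
  "P3G Lam = (if (\<exists>x\<in>Lam. x > 0) \<and> (\<exists>x\<in>Lam. x < 0) \<and>
                   (x_plus Lam < x_minus Lam \<or> 0 \<notin> Lam)
              then inverse (1 + x_plus Lam / x_minus Lam) else 1/2)"

end

theory Submission
  imports Defs
begin

lemma split3:
  fixes f :: "real \<Rightarrow> real"
  assumes "finite L"
  shows "sum f L = sum f {x\<in>L. x>0} + sum f {x\<in>L. x=0} + sum f {x\<in>L. x<0}"
proof -
  have "sum f {x\<in>L. x>0} + sum f {x\<in>L. x=0} + sum f {x\<in>L. x<0}
     = sum (\<lambda>x. if x>0 then f x else 0) L + sum (\<lambda>x. if x=0 then f x else 0) L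
       + sum (\<lambda>x. if x<0 then f x else 0) L"
    by (simp only: sum.inter_filter[OF assms])
  also have "\<dots> = sum (\<lambda>x. (if x>0 then f x else 0) + (if x=0 then f x else 0) + (if x<0 then f x else 0)) L"
    by (simp add: sum.distrib)
  also have "\<dots> = sum f L"
    by (rule sum.cong) auto
  finally show ?thesis by simp
qed

theorem mainTheorem1:
  fixes S :: "'s set" and Lam :: "real set" and Pr :: "nat \<Rightarrow> 's \<Rightarrow> real \<Rightarrow> real"
  assumes fin: "finite Lam"
    and nonneg: "\<And>s k a. s \<in> S \<Longrightarrow> k < 3 \<Longrightarrow> Pr k s a \<ge> 0"
    and supp: "\<And>s k a. s \<in> S \<Longrightarrow> k < 3 \<Longrightarrow> a \<notin> Lam \<Longrightarrow> Pr k s a = 0"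
    and total: "\<And>s k. s \<in> S \<Longrightarrow> k < 3 \<Longrightarrow> (\<Sum>a\<in>Lam. Pr k s a) = 1"
    and attained: "\<And>a. a \<in> Lam \<Longrightarrow> \<exists>s\<in>S. \<exists>k<3. Pr k s a > 0"
    and M: "\<And>s. s \<in> S \<Longrightarrow> (\<Sum>k<3. expval Lam Pr k s) = 0"
    and s: "s \<in> S"
  shows "P3 Lam Pr s \<le> P3G Lam"
proof -
  define Lp where "Lp = {x\<in>Lam. x>0}"
  define Ln where "Ln = {x\<in>Lam. x<0}"
  define Lz where "Lz = {x\<in>Lam. x=0}"
  define xp where "xp = x_plus Lam"
  define xm where "xm = x_minus Lam"
  define pos where "pos k = (\<Sum>a\<in>Lp. a * Pr k s a)" for k
  define neg where "neg k = (\<Sum>a\<in>Ln. a * Pr k s a)" for k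
  define pp where "pp k = (\<Sum>a\<in>Lp. Pr k s a)" for k
  define zz where "zz k = (\<Sum>a\<in>Lz. Pr k s a)" for k
  define nn where "nn k = (\<Sum>a\<in>Ln. Pr k s a)" for k
  have finp: "finite Lp" and finn: "finite Ln" and finz: "finite Lz"
    using fin by (auto simp: Lp_def Ln_def Lz_def)
  have tot: "pp k + zz k + nn k = 1" if "k<3" for k
    using total[OF s that] split3[OF fin, of "Pr k s"] by (simp add: pp_def zz_def nn_def Lp_def Lz_def Ln_def)
  have zsum0: "(\<Sum>a\<in>Lz. a * Pr k s a) = 0" for k
    by (rule sum.neutral) (auto simp: Lz_def)
  have ex: "expval Lam Pr k s = pos k + neg k" for k
    using split3[OF fin, of "\<lambda>a. a * Pr k s a"] zsum0[of k]
    by (simp add: expval_def pos_def neg_def Lp_def Lz_def Ln_def)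
  have ppnn: "pp k \<ge> 0" "nn k \<ge> 0" "zz k \<ge> 0" if "k<3" for k
    using nonneg[OF s that] by (auto simp: pp_def nn_def zz_def intro: sum_nonneg)
  have posge0: "pos k \<ge> 0" if "k<3" for k
    using nonneg[OF s that] unfolding pos_def Lp_def by (auto intro!: sum_nonneg)
  have negle0: "neg k \<le> 0" if "k<3" for k
    using nonneg[OF s that] unfolding neg_def Ln_def by (auto intro!: sum_nonpos simp: mult_nonpos_nonneg)
  have posb: "pos k \<ge> xp * pp k" if "k<3" "Lp \<noteq> {}" for k
  proof -
    have "xp * pp k = (\<Sum>a\<in>Lp. xp * Pr k s a)" by (simp add: pp_def sum_distrib_left)
    also have "\<dots> \<le> pos k" unfolding pos_def
    proof (rule sum_mono)
      fix a assume a: "a \<in> Lp"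
      have "xp \<le> a" unfolding xp_def x_plus_def using a finp Lp_def by (simp add: Min_le)
      then show "xp * Pr k s a \<le> a * Pr k s a"
        using nonneg[OF s that(1)] by (simp add: mult_right_mono)
    qed
    finally show ?thesis .
  qed
  have negb: "neg k \<ge> - xm * nn k" if "k<3" "Ln \<noteq> {}" for k
  proof -
    have "- xm * nn k = (\<Sum>a\<in>Ln. (- xm) * Pr k s a)" by (simp add: nn_def sum_distrib_left)
    also have "\<dots> \<le> neg k" unfolding neg_def
    proof (rule sum_mono)
      fix a assume a: "a \<in> Ln"
      have "- xm \<le> a" unfolding xm_def x_minus_def using a finn Ln_def by (simp add: Min_le)
      then show "(- xm) * Pr k s a \<le> a * Pr k s a"
        using nonneg[OF s that(1)] by (rule mult_right_mono)
    qed
    finally show ?thesis .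
  qed
  have xpos: "xp > 0" if "Lp \<noteq> {}"
    unfolding xp_def x_plus_def using that finp Lp_def by (simp add: Min_gr_iff)
  have xmpos: "xm > 0" if "Ln \<noteq> {}"
  proof -
    have "Min Ln < 0" using that finn Ln_def by (subst Min_less_iff) auto
    then show ?thesis unfolding xm_def x_minus_def Ln_def by simp
  qed
  define P where "P = pp 0 + pp 1 + pp 2"
  define Z where "Z = zz 0 + zz 1 + zz 2"
  define N where "N = nn 0 + nn 1 + nn 2"
  have PZN: "P + Z + N = 3" using tot[of 0] tot[of 1] tot[of 2] by (simp add: P_def Z_def N_def)
  have nonnegs: "P \<ge> 0" "Z \<ge> 0" "N \<ge> 0"
    using ppnn[of 0] ppnn[of 1] ppnn[of 2] by (auto simp: P_def Z_def N_def)
  have E: "pos 0 + pos 1 + pos 2 + (neg 0 + neg 1 + neg 2) = 0"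
    using M[OF s] by (simp add: numeral_3_eq_3 numeral_2_eq_2 lessThan_Suc ex algebra_simps)
  have P3eq: "P3 Lam Pr s = (P + Z/2) / 3"
    unfolding P_def Z_def
    by (simp add: P3_def numeral_3_eq_3 numeral_2_eq_2 lessThan_Suc prob_pos_def prob_zero_def
        pp_def zz_def P_def Z_def Lp_def Lz_def algebra_simps)
  show ?thesis
  proof (cases "Lp \<noteq> {} \<and> Ln \<noteq> {}")
    case True
    have xp: "xp > 0" and xm: "xm > 0" using True xpos xmpos by auto
    have key: "xp * P \<le> xm * N"
      using E posb[of 0] posb[of 1] posb[of 2] negb[of 0] negb[of 1] negb[of 2] True
      by (simp add: P_def N_def algebra_simps)
    have c1: "(\<exists>x\<in>Lam. x > 0) \<and> (\<exists>x\<in>Lam. x < 0)" using True Lp_def Ln_def by auto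
    show ?thesis
    proof (cases "xp < xm \<or> 0 \<notin> Lam")
      case True2: True
      have G: "P3G Lam = xm / (xm + xp)"
        using c1 True2 xp xm by (simp add: P3G_def xp_def[symmetric] xm_def[symmetric] field_simps)
      have "(xm + xp) * (P + Z/2) \<le> 3 * xm"
      proof (cases "0 \<in> Lam")
        case False
        then have "Lz = {}" by (auto simp: Lz_def)
        then have "Z = 0" by (simp add: Z_def zz_def)
        then have "N = 3 - P" using PZN by simp
        then have "xp * P \<le> xm * 3 - xm * P" using key by (simp add: right_diff_distrib)
        then show ?thesis using \<open>Z = 0\<close> by (simp add: algebra_simps)
      next
        case True
        then have "xp < xm" using True2 by auto
        then have "0 \<le> -xp * P + xm * N + (xm-xp) * Z" using key nonnegs by simp
        moreover have "xm*3 = xm*P + xm*Z + xm*N" using PZN by (metis distrib_left)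
        ultimately have "2*(xp*P) + xp*Z \<le> 2*(xm*N) + xm*Z" using key by (simp add: algebra_simps)
        then show ?thesis using \<open>xm*3 = xm*P + xm*Z + xm*N\<close> by (simp add: field_simps)
      qed
      then show ?thesis unfolding P3eq G using xp xm by (simp add: field_simps)
    next
      case False
      have G: "P3G Lam = 1/2" using False by (simp add: P3G_def xp_def[symmetric] xm_def[symmetric])
      have "xm * N \<le> xp * N" using False nonnegs by (simp add: mult_right_mono)
      then have "P \<le> N" using key xp by (smt (verit) mult_le_cancel_left_pos)
      then show ?thesis unfolding P3eq G using PZN by simp
    qed
  next
    case False
    have "P = 0"
    proof (cases "Lp = {}")
      case True then show ?thesis by (simp add: P_def pp_def)
    next
      case False2: False
      then have "Ln = {}" using False by auto
      then have "neg k = 0" for k by (simp add: neg_def)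
      then have "xp * P \<le> 0"
        using E posb[of 0] posb[of 1] posb[of 2] False2 by (simp add: P_def algebra_simps)
      then show ?thesis using xpos[OF False2] nonnegs by (simp add: mult_le_0_iff)
    qed
    moreover have "P3G Lam \<ge> 1/2"
    proof -
      have "\<not> ((\<exists>x\<in>Lam. x > 0) \<and> (\<exists>x\<in>Lam. x < 0))" using False Lp_def Ln_def by auto
      then have "P3G Lam = 1/2" unfolding P3G_def by (simp only: de_Morgan_conj if_P) auto
      then show ?thesis by simp
    qed
    ultimately show ?thesis unfolding P3eq using PZN nonnegs by simp
  qed
qed

end
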